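(* Let $\gamma=(\gamma_1,\dots,\gamma_d)\in\mathbb R^d$ and $\mathbf n\in\mathbb N_0^d$ with $n_i\ge1$ for $1\le i\le d$. Then $$P_{\mathbf n}^{(\gamma,-1)}(x)=(1-|x|)\sum_{i=1}^d\frac{n_i(\gamma_i+n_i)}{|\mathbf n|}P_{\mathbf n-e_i}^{(\gamma,1)}(x).$$
   Context: $|x|=x_1+\dots+x_d$, $|\mathbf n|=n_1+\dots+n_d$, $e_i$ the standard basis of $\mathbb R^d$. For $\boldsymbol\gamma=(\gamma_1,\dots,\gamma_{d+1})\in\mathbb R^{d+1}$ and $\mathbf n\in\mathbb N_0^d$, the Rodrigues function on the interior of the simplex $T^d=\{x_i\ge0,|x|\le1\}$ is $P_{\mathbf n}^{\boldsymbol\gamma}(x)=x_1^{-\gamma_1}\cdots x_d^{-\gamma_d}(1-|x|)^{-\gamma_{d+1}}\frac{\partial^{|\mathbf n|}}{\partial x_1^{n_1}\cdots\partial x_d^{n_d}}\big[x_1^{\gamma_1+n_1}\cdots x_d^{\gamma_d+n_d}(1-|x|)^{\gamma_{d+1}+|\mathbf n|}\big]$; $(\gamma,c)$ denotes $(\gamma_1,\dots,\gamma_d,c)$. *)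

theory Defs
  imports "HOL-Analysis.Analysis"
begin

text \<open>Points of R^d are functions x :: nat => real, coordinates x 1, ..., x d
(other coordinates are ignored). Multi-indices n :: nat => nat with entries n 1..n d;
gamma :: nat => real with entries gamma 1 .. gamma (d+1).\<close>

definition abs_sum :: "nat \<Rightarrow> (nat \<Rightarrow> 'a::comm_monoid_add) \<Rightarrow> 'a" where
  "abs_sum d x = (\<Sum>i=1..d. x i)"

definition partial :: "nat \<Rightarrow> ((nat \<Rightarrow> real) \<Rightarrow> real) \<Rightarrow> (nat \<Rightarrow> real) \<Rightarrow> real" where
  "partial i f x = deriv (\<lambda>t. f (x(i := t))) (x i)"

fun mixed_partial :: "nat \<Rightarrow> (nat \<Rightarrow> nat) \<Rightarrow> ((nat \<Rightarrow> real) \<Rightarrow> real) \<Rightarrow> (nat \<Rightarrow> real) \<Rightarrow> real" where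
  "mixed_partial 0 n f = f"
| "mixed_partial (Suc k) n f = (partial (Suc k) ^^ n (Suc k)) (mixed_partial k n f)"

definition in_simplex_interior :: "nat \<Rightarrow> (nat \<Rightarrow> real) \<Rightarrow> bool" where
  "in_simplex_interior d x \<longleftrightarrow> (\<forall>i\<in>{1..d}. 0 < x i) \<and> abs_sum d x < 1"

definition rodrigues :: "nat \<Rightarrow> (nat \<Rightarrow> real) \<Rightarrow> (nat \<Rightarrow> nat) \<Rightarrow> (nat \<Rightarrow> real) \<Rightarrow> real" where
  "rodrigues d \<gamma> n x =
     (\<Prod>i=1..d. x i powr (- \<gamma> i)) * (1 - abs_sum d x) powr (- \<gamma> (d+1)) *
     mixed_partial d n
       (\<lambda>y. (\<Prod>i=1..d. y i powr (\<gamma> i + real (n i))) *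
            (1 - abs_sum d y) powr (\<gamma> (d+1) + real (abs_sum d n))) x"

end

theory Submission
  imports Defs
begin

type_synonym trm = "real \<times> (nat \<Rightarrow> real) \<times> real"

fun Et :: "nat \<Rightarrow> trm \<Rightarrow> (nat \<Rightarrow> real) \<Rightarrow> real" where
  "Et d (c,a,b) y = c * (\<Prod>j=1..d. y j powr a j) * (1 - abs_sum d y) powr b"

definition E :: "nat \<Rightarrow> trm list \<Rightarrow> (nat \<Rightarrow> real) \<Rightarrow> real" where
  "E d T y = (\<Sum>\<tau>\<leftarrow>T. Et d \<tau> y)"

fun dterm :: "nat \<Rightarrow> trm \<Rightarrow> trm list" where
  "dterm i (c,a,b) = [(c * a i, a(i := a i - 1), b), (-(c*b), a, b - 1)]"

definition dT :: "nat \<Rightarrow> trm list \<Rightarrow> trm list" where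
  "dT i T = concat (map (dterm i) T)"

lemma E_Nil[simp]: "E d [] y = 0" by (simp add: E_def)
lemma E_Cons[simp]: "E d (t#T) y = Et d t y + E d T y" by (simp add: E_def)
lemma E_append[simp]: "E d (T@S) y = E d T y + E d S y" by (simp add: E_def)
lemma dT_Nil[simp]: "dT i [] = []" by (simp add: dT_def)
lemma dT_Cons[simp]: "dT i (t#T) = dterm i t @ dT i T" by (simp add: dT_def)
lemma dT_append[simp]: "dT i (T@S) = dT i T @ dT i S" by (simp add: dT_def)

lemma sum_upd: "i \<in> A \<Longrightarrow> finite A \<Longrightarrow> sum (f(i:=v)) A + f i = sum f A + (v::'a::comm_monoid_add)"
proof -
  assume "i \<in> A" "finite A"
  then have "sum (f(i:=v)) A = v + sum (f(i:=v)) (A - {i})" "sum f A = f i + sum f (A - {i})"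
    by (simp_all add: sum.remove)
  moreover have "sum (f(i:=v)) (A - {i}) = sum f (A - {i})" by (rule sum.cong) auto
  ultimately show ?thesis by (simp add: ac_simps)
qed

lemma abs_sum_upd: fixes d::nat and y::"nat\<Rightarrow>real" shows "i \<in> {1..d} \<Longrightarrow> abs_sum d (y(i:=t)) = abs_sum d y - y i + (t::real)"
  using sum_upd[of i "{1..d}" y t] unfolding abs_sum_def by simp

lemma prod_upd: fixes d::nat and y::"nat\<Rightarrow>real" shows "i \<in> {1..d} \<Longrightarrow> (\<Prod>j=1..d. (y(i:=t)) j powr a j) = t powr a i * (\<Prod>j\<in>{1..d}-{i}. y j powr a j)"
proof -
  assume i: "i \<in> {1..d}"
  have "(\<Prod>j=1..d. (y(i:=t)) j powr a j) = t powr a i * (\<Prod>j\<in>{1..d}-{i}. (y(i:=t)) j powr a j)"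
    by (subst prod.remove[OF _ i]) simp_all
  also have "(\<Prod>j\<in>{1..d}-{i}. (y(i:=t)) j powr a j) = (\<Prod>j\<in>{1..d}-{i}. y j powr a j)"
    by (rule prod.cong) auto
  finally show ?thesis .
qed

lemma prod_upd2: fixes d::nat and y::"nat\<Rightarrow>real" shows "i \<in> {1..d} \<Longrightarrow> (\<Prod>j=1..d. y j powr (a(i:=v)) j) = y i powr v * (\<Prod>j\<in>{1..d}-{i}. y j powr a j)"
proof -
  assume i: "i \<in> {1..d}"
  have "(\<Prod>j=1..d. y j powr (a(i:=v)) j) = y i powr v * (\<Prod>j\<in>{1..d}-{i}. y j powr (a(i:=v)) j)"
    by (subst prod.remove[OF _ i]) simp_all
  also have "(\<Prod>j\<in>{1..d}-{i}. y j powr (a(i:=v)) j) = (\<Prod>j\<in>{1..d}-{i}. y j powr a j)"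
    by (rule prod.cong) auto
  finally show ?thesis .
qed

lemma prod_split: fixes d::nat and y::"nat\<Rightarrow>real" assumes "i \<in> {1..d}" shows "(\<Prod>j=1..d. y j powr a j) = y i powr a i * (\<Prod>j\<in>{1..d}-{i}. y j powr a j)"
  by (subst prod.remove[OF _ \<open>i \<in> {1..d}\<close>]) simp_all

abbreviation U :: "nat \<Rightarrow> (nat \<Rightarrow> real) \<Rightarrow> bool" where "U \<equiv> in_simplex_interior"

lemma deriv_Et:
  assumes y: "U d y" and i: "i \<in> {1..d}"
  shows "((\<lambda>t. Et d \<tau> (y(i:=t))) has_real_derivative E d (dterm i \<tau>) y) (at (y i))"
proof -
  obtain c a b where tau: "\<tau> = (c,a,b)" by (cases \<tau>) auto
  define P where "P = (\<Prod>j\<in>{1..d}-{i}. y j powr a j)"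
  define S where "S = abs_sum d y"
  have pos: "y i > 0" "1 - S > 0" using y i unfolding in_simplex_interior_def S_def by auto
  have f: "(\<lambda>t. Et d \<tau> (y(i:=t))) = (\<lambda>t. c * (t powr a i * P) * (1 - (S - y i + t)) powr b)"
    unfolding tau Et.simps prod_upd[OF i] abs_sum_upd[OF i] P_def S_def ..
  have "((\<lambda>t. c * (t powr a i * P) * (1 - (S - y i + t)) powr b) has_real_derivative
        c * (a i * y i powr (a i - 1) * P) * (1 - S) powr b + c * (y i powr a i * P) * (b * (1 - S) powr (b - 1) * (-1))) (at (y i))"
    using pos by (auto intro!: derivative_eq_intros)
  moreover have "E d (dterm i \<tau>) y = c * (a i * y i powr (a i - 1) * P) * (1 - S) powr b + c * (y i powr a i * P) * (b * (1 - S) powr (b - 1) * (-1))"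
    unfolding tau dterm.simps E_Cons E_Nil Et.simps prod_upd2[OF i] prod_split[OF i, of y a] P_def S_def
    by (simp add: algebra_simps)
  ultimately show ?thesis using f by simp
qed


lemma deriv_E:
  assumes y: "U d y" and i: "i \<in> {1..d}"
  shows "((\<lambda>t. E d T (y(i:=t))) has_real_derivative E d (dT i T) y) (at (y i))"
proof (induction T)
  case Nil then show ?case by simp
next
  case (Cons t T)
  show ?case unfolding E_Cons dT_Cons E_append
    by (intro DERIV_add deriv_Et[OF y i] Cons)
qed

lemma partial_E: "U d y \<Longrightarrow> i \<in> {1..d} \<Longrightarrow> partial i (E d T) y = E d (dT i T) y"
  unfolding partial_def by (rule DERIV_imp_deriv[OF deriv_E])

lemma line_U:
  assumes y: "U d y" and i: "i \<in> {1..d}"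
  shows "eventually (\<lambda>t. U d (y(i:=t))) (nhds (y i))"
proof -
  let ?S = "{0<..<y i + (1 - abs_sum d y)}"
  have "y i \<in> ?S" using y i unfolding in_simplex_interior_def by auto
  then have "eventually (\<lambda>t. t \<in> ?S) (nhds (y i))" by (intro eventually_nhds_in_open) auto
  then show ?thesis
  proof eventually_elim
    case (elim t)
    then show ?case using y i unfolding in_simplex_interior_def abs_sum_upd[OF i] by auto
  qed
qed

lemma partial_cong:
  assumes fg: "\<And>z. U d z \<Longrightarrow> f z = g z" and y: "U d y" and i: "i \<in> {1..d}"
  shows "partial i f y = partial i g y"
  unfolding partial_def
proof (rule deriv_cong_ev[OF _ refl])
  show "\<forall>\<^sub>F t in nhds (y i). f (y(i := t)) = g (y(i := t))"
    using line_U[OF y i] by eventually_elim (simp add: fg)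
qed

definition rep :: "nat \<Rightarrow> ((nat \<Rightarrow> real) \<Rightarrow> real) \<Rightarrow> bool" where
  "rep d f \<longleftrightarrow> (\<exists>T. \<forall>y. U d y \<longrightarrow> f y = E d T y)"

lemma rep_E[simp]: "rep d (E d T)" unfolding rep_def by auto

definition scale :: "real \<Rightarrow> trm list \<Rightarrow> trm list" where
  "scale c T = map (\<lambda>(c',a,b). (c*c',a,b)) T"

definition mulL :: "trm list \<Rightarrow> trm list" where
  "mulL T = map (\<lambda>(c',a,b). (c',a,b+1)) T"

lemma E_scale: "E d (scale c T) y = c * E d T y"
  by (induction T) (auto simp: scale_def algebra_simps)

lemma dT_scale: "E d (dT i (scale c T)) y = c * E d (dT i T) y"
  by (induction T) (auto simp: scale_def algebra_simps)

definition Lf :: "nat \<Rightarrow> (nat \<Rightarrow> real) \<Rightarrow> real" where "Lf d y = 1 - abs_sum d y"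

lemma Et_alt: "Et d (c,a,b) y = c * (\<Prod>j=1..d. y j powr a j) * Lf d y powr b"
  by (simp add: Lf_def)

lemma Lf_pos: "U d y \<Longrightarrow> Lf d y > 0" unfolding in_simplex_interior_def Lf_def by auto

lemma E_mulL: "U d y \<Longrightarrow> E d (mulL T) y = Lf d y * E d T y"
proof (induction T)
  case Nil then show ?case by (simp add: mulL_def)
next
  case (Cons t T)
  obtain c a b where t: "t = (c,a,b)" by (cases t) auto
  have e: "Lf d y powr (b+1) = Lf d y * Lf d y powr b"
    using Lf_pos[OF Cons.prems] by (simp add: powr_add)
  have "E d (mulL (t#T)) y = Et d (c,a,b+1) y + E d (mulL T) y" by (simp add: mulL_def t)
  also have "\<dots> = Lf d y * E d (t#T) y" 
    unfolding Et_alt e Cons.IH[OF Cons.prems] by (simp add: t Et_alt algebra_simps del: Et.simps)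
  finally show ?case .
qed

lemma dT_mulL: "U d y \<Longrightarrow> E d (dT i (mulL T)) y = Lf d y * E d (dT i T) y - E d T y"
proof (induction T)
  case Nil then show ?case by (simp add: mulL_def)
next
  case (Cons t T)
  obtain c a b where t: "t = (c,a,b)" by (cases t) auto
  have e: "Lf d y powr (b+1) = Lf d y * Lf d y powr b"
    using Lf_pos[OF Cons.prems] by (simp add: powr_add)
  have e2: "Lf d y powr b = Lf d y * Lf d y powr (b - 1)"
    using Lf_pos[OF Cons.prems] powr_add[of "Lf d y" 1 "b-1"] by simp
  have "E d (dT i (mulL (t#T))) y = E d (dterm i (c,a,b+1)) y + E d (dT i (mulL T)) y" by (simp add: mulL_def t)
  also have "E d (dterm i (c,a,b+1)) y = Lf d y * E d (dterm i (c,a,b)) y - Et d (c,a,b) y"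
    apply (simp only: dterm.simps E_Cons E_Nil Et_alt add_diff_cancel)
    apply (simp only: e)
    apply (simp only: e2)
    by (simp add: algebra_simps)
  finally show ?case using Cons by (simp add: t algebra_simps)
qed

lemma dT_comm: "E d (dT i (dT j T)) y = E d (dT j (dT i T)) y"
proof (induction T)
  case Nil then show ?case by simp
next
  case (Cons t T)
  obtain c a b where t: "t = (c,a,b)" by (cases t) auto
  show ?case
  proof (cases "i = j")
    case True then show ?thesis by simp
  next
    case False
    then have "a(j := a j - 1, i := a i - 1) = a(i := a i - 1, j := a j - 1)" by (rule fun_upd_twist[symmetric])
    then show ?thesis using Cons False by (simp add: t algebra_simps)
  qed
qed


lemma partial_rep_E:
  assumes "\<And>z. U d z \<Longrightarrow> f z = E d T z" "U d y" "i \<in> {1..d}"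
  shows "partial i f y = E d (dT i T) y"
  using partial_cong[OF assms(1) assms(2,3)] partial_E[OF assms(2,3)] by simp

lemma rep_partial: "rep d f \<Longrightarrow> i \<in> {1..d} \<Longrightarrow> rep d (partial i f)"
  unfolding rep_def using partial_rep_E by blast

lemma rep_lin: "rep d f \<Longrightarrow> rep d g \<Longrightarrow> rep d (\<lambda>z. a * f z + b * g z)"
  unfolding rep_def
proof (elim exE)
  fix T S assume "\<forall>y. U d y \<longrightarrow> f y = E d T y" "\<forall>y. U d y \<longrightarrow> g y = E d S y"
  then show "\<exists>R. \<forall>y. U d y \<longrightarrow> a * f y + b * g y = E d R y"
    by (intro exI[of _ "scale a T @ scale b S"]) (simp add: E_scale)
qed

lemma partial_lin:
  assumes "rep d f" "rep d g" "U d y" "i \<in> {1..d}"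
  shows "partial i (\<lambda>z. a * f z + b * g z) y = a * partial i f y + b * partial i g y"
proof -
  obtain T S where T: "\<And>y. U d y \<Longrightarrow> f y = E d T y" and S: "\<And>y. U d y \<Longrightarrow> g y = E d S y"
    using assms(1,2) unfolding rep_def by blast
  have "partial i (\<lambda>z. a * f z + b * g z) y = E d (dT i (scale a T @ scale b S)) y"
    by (rule partial_rep_E[OF _ assms(3,4)]) (simp add: E_scale T S)
  also have "\<dots> = a * partial i f y + b * partial i g y"
    using partial_rep_E[OF T assms(3,4)] partial_rep_E[OF S assms(3,4)] by (simp add: dT_scale)
  finally show ?thesis .
qed

lemma rep_mulL: "rep d f \<Longrightarrow> rep d (\<lambda>z. Lf d z * f z)"
  unfolding rep_def
proof (elim exE)
  fix T assume "\<forall>y. U d y \<longrightarrow> f y = E d T y"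
  then show "\<exists>R. \<forall>y. U d y \<longrightarrow> Lf d y * f y = E d R y"
    by (intro exI[of _ "mulL T"]) (simp add: E_mulL)
qed

lemma partial_mulL:
  assumes "rep d f" "U d y" "i \<in> {1..d}"
  shows "partial i (\<lambda>z. Lf d z * f z) y = Lf d y * partial i f y - f y"
proof -
  obtain T where T: "\<And>y. U d y \<Longrightarrow> f y = E d T y"
    using assms(1) unfolding rep_def by blast
  have "partial i (\<lambda>z. Lf d z * f z) y = E d (dT i (mulL T)) y"
    by (rule partial_rep_E[OF _ assms(2,3)]) (simp add: E_mulL T)
  then show ?thesis
    using partial_rep_E[OF T assms(2,3)] T[OF assms(2)] by (simp add: dT_mulL assms(2))
qed

lemma partial_comm:
  assumes "rep d f" "U d y" "i \<in> {1..d}" "j \<in> {1..d}"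
  shows "partial i (partial j f) y = partial j (partial i f) y"
proof -
  obtain T where T: "\<And>y. U d y \<Longrightarrow> f y = E d T y"
    using assms(1) unfolding rep_def by blast
  have "partial i (partial j f) y = E d (dT i (dT j T)) y"
    by (rule partial_rep_E[OF _ assms(2,3)]) (rule partial_rep_E[OF T _ assms(4)])
  moreover have "partial j (partial i f) y = E d (dT j (dT i T)) y"
    by (rule partial_rep_E[OF _ assms(2,4)]) (rule partial_rep_E[OF T _ assms(3)])
  ultimately show ?thesis by (simp add: dT_comm)
qed

definition good :: "nat \<Rightarrow> (((nat \<Rightarrow> real) \<Rightarrow> real) \<Rightarrow> ((nat \<Rightarrow> real) \<Rightarrow> real)) \<Rightarrow> bool" where
  "good d Op \<longleftrightarrow> (\<forall>f. rep d f \<longrightarrow> rep d (Op f)) \<and>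
     (\<forall>f g. (\<forall>z. U d z \<longrightarrow> f z = g z) \<longrightarrow> (\<forall>y. U d y \<longrightarrow> Op f y = Op g y)) \<and>
     (\<forall>f g a b. rep d f \<longrightarrow> rep d g \<longrightarrow> (\<forall>y. U d y \<longrightarrow> Op (\<lambda>z. a * f z + b * g z) y = a * Op f y + b * Op g y))"

lemma good_rep: "good d Op \<Longrightarrow> rep d f \<Longrightarrow> rep d (Op f)" unfolding good_def by blast
lemma good_cong: "good d Op \<Longrightarrow> (\<And>z. U d z \<Longrightarrow> f z = g z) \<Longrightarrow> U d y \<Longrightarrow> Op f y = Op g y"
  unfolding good_def by blast
lemma good_lin: "good d Op \<Longrightarrow> rep d f \<Longrightarrow> rep d g \<Longrightarrow> U d y \<Longrightarrow> Op (\<lambda>z. a * f z + b * g z) y = a * Op f y + b * Op g y"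
  unfolding good_def by blast

lemma good_partial: "i \<in> {1..d} \<Longrightarrow> good d (partial i)"
  unfolding good_def using rep_partial partial_cong partial_lin by blast

lemma good_id: "good d (\<lambda>f. f)" unfolding good_def by auto

lemma good_comp: assumes "good d A" "good d B" shows "good d (\<lambda>f. A (B f))"
  unfolding good_def
proof (intro conjI allI impI)
  fix f assume "rep d f" then show "rep d (A (B f))" using assms good_rep by blast
next
  fix f g :: "(nat \<Rightarrow> real) \<Rightarrow> real" and y assume "\<forall>z. U d z \<longrightarrow> f z = g z" "U d y"
  then show "A (B f) y = A (B g) y"
    by (intro good_cong[OF assms(1)] good_cong[OF assms(2)]) auto
next
  fix f g :: "(nat \<Rightarrow> real) \<Rightarrow> real" and a b y assume fg: "rep d f" "rep d g" "U d y"
  have "A (B (\<lambda>z. a * f z + b * g z)) y = A (\<lambda>z. a * B f z + b * B g z) y"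
    by (rule good_cong[OF assms(1)]) (auto intro: good_lin[OF assms(2) fg(1,2)] simp: fg)
  also have "\<dots> = a * A (B f) y + b * A (B g) y"
    by (rule good_lin[OF assms(1) good_rep[OF assms(2) fg(1)] good_rep[OF assms(2) fg(2)] fg(3)])
  finally show "A (B (\<lambda>z. a * f z + b * g z)) y = a * A (B f) y + b * A (B g) y" .
qed

lemma good_pow: "good d P \<Longrightarrow> good d (P ^^ r)"
proof (induction r)
  case 0 then show ?case using good_id by (simp add: id_def)
next
  case (Suc r)
  then show ?case using good_comp[OF Suc.prems Suc.IH[OF Suc.prems]] by (simp add: comp_def)
qed

lemma good_mixed: "k \<le> d \<Longrightarrow> good d (mixed_partial k m)"
proof (induction k)
  case 0 then show ?case using good_id by simp
next
  case (Suc k)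
  have "good d (partial (Suc k) ^^ m (Suc k))" using Suc.prems by (intro good_pow good_partial) auto
  from good_comp[OF this Suc.IH] Suc.prems show ?case by simp
qed

lemma rep_zero: "rep d (\<lambda>z. 0)"
proof -
  have "E d [] = (\<lambda>z. 0)" by (rule ext) simp
  then show ?thesis using rep_E[of d "[]"] by simp
qed

lemma rep_sum: "finite A \<Longrightarrow> (\<And>j. j \<in> A \<Longrightarrow> rep d (F j)) \<Longrightarrow> rep d (\<lambda>z. \<Sum>j\<in>A. c j * F j z)"
proof (induction A rule: finite_induct)
  case empty then show ?case using rep_zero by simp
next
  case (insert x A)
  have "rep d (\<lambda>z. c x * F x z + 1 * (\<Sum>j\<in>A. c j * F j z))"
    using insert by (intro rep_lin) auto
  then show ?case using insert by simp
qed

lemma good_scale: "good d Op \<Longrightarrow> rep d f \<Longrightarrow> U d y \<Longrightarrow> Op (\<lambda>z. c * f z) y = c * Op f y"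
  using good_lin[of d Op f f y c 0] by simp

lemma good_sum: assumes G: "good d Op" and y: "U d y" shows "finite A \<Longrightarrow> (\<And>j. j \<in> A \<Longrightarrow> rep d (F j)) \<Longrightarrow>
   Op (\<lambda>z. \<Sum>j\<in>A. c j * F j z) y = (\<Sum>j\<in>A. c j * Op (F j) y)"
proof (induction A rule: finite_induct)
  case empty
  have "Op (\<lambda>z. 0 * 0 + 0 * 0) y = 0 * Op (\<lambda>z. 0) y + 0 * Op (\<lambda>z. 0) y"
    by (rule good_lin[OF G rep_zero rep_zero y])
  then show ?case by simp
next
  case (insert x A)
  have "Op (\<lambda>z. 1 * (c x * F x z) + 1 * (\<Sum>j\<in>A. c j * F j z)) y
     = 1 * Op (\<lambda>z. c x * F x z) y + 1 * Op (\<lambda>z. \<Sum>j\<in>A. c j * F j z) y"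
    using insert rep_lin[of d "F x" "F x" "c x" 0] by (intro good_lin[OF G] rep_lin rep_sum y) auto
  then show ?case using insert good_scale[OF G _ y, of "F x" "c x"] by simp
qed


lemma mixed_idx: "(\<And>j. 1 \<le> j \<Longrightarrow> j \<le> k \<Longrightarrow> m j = m' j) \<Longrightarrow> mixed_partial k m = mixed_partial k m'"
proof (induction k)
  case 0 then show ?case by (simp add: fun_eq_iff)
next
  case (Suc k)
  have "mixed_partial k m = mixed_partial k m'" using Suc by auto
  moreover have "m (Suc k) = m' (Suc k)" using Suc.prems by auto
  ultimately show ?case by (intro ext) simp
qed

lemma helper1: "(X0::real) = 1*Y + (-r)*W \<Longrightarrow> Y = L*Q1 - Q0 \<Longrightarrow> r*W = r*Q0 \<Longrightarrow> X0 = L*Q1 - (r+1)*Q0"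
  by (cases "r = 0") (simp_all add: algebra_simps)

lemma helper2: "(X0::real) = 1*(a - b) + (-1)*c \<Longrightarrow> X0 = a - (c + b)" by simp

lemma iterLeib:
  assumes i: "i \<in> {1..d}" and A: "rep d A"
  shows "U d y \<Longrightarrow> (partial i ^^ r) (\<lambda>z. Lf d z * A z) y = Lf d y * (partial i ^^ r) A y - real r * (partial i ^^ (r - 1)) A y"
proof (induction r arbitrary: y)
  case 0 then show ?case by simp
next
  case (Suc r)
  let ?P = "partial i"
  have G: "good d (?P ^^ q)" for q by (intro good_pow good_partial i)
  have R: "rep d ((?P ^^ q) A)" for q by (rule good_rep[OF G A])
  have "(?P ^^ Suc r) (\<lambda>z. Lf d z * A z) y = ?P (\<lambda>z. 1 * (Lf d z * (?P ^^ r) A z) + (- real r) * (?P ^^ (r - 1)) A z) y"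
    using Suc.IH by (simp, intro partial_cong[OF _ Suc.prems i]) simp
  also have "\<dots> = 1 * ?P (\<lambda>z. Lf d z * (?P ^^ r) A z) y + (- real r) * ?P ((?P ^^ (r - 1)) A) y"
    by (rule partial_lin[OF rep_mulL[OF R] R Suc.prems i])
  finally have X: "(?P ^^ Suc r) (\<lambda>z. Lf d z * A z) y = 1 * ?P (\<lambda>z. Lf d z * (?P ^^ r) A z) y + (- real r) * ?P ((?P ^^ (r - 1)) A) y" .
  have e3: "real r * ?P ((?P ^^ (r - 1)) A) y = real r * (?P ^^ r) A y"
    by (cases r) auto
  have M: "?P (\<lambda>z. Lf d z * (?P ^^ r) A z) y = Lf d y * ?P ((?P ^^ r) A) y - (?P ^^ r) A y"
    by (rule partial_mulL[OF R Suc.prems i])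
  have eqs: "(?P ^^ Suc r) A = ?P ((?P ^^ r) A)" "Suc r - 1 = r" "real (Suc r) = real r + 1" by simp_all
  show ?case unfolding eqs by (rule helper1[OF X M e3])
qed

lemma Leibniz:
  assumes g: "rep d g"
  shows "k \<le> d \<Longrightarrow> U d y \<Longrightarrow> mixed_partial k m (\<lambda>z. Lf d z * g z) y =
     Lf d y * mixed_partial k m g y - (\<Sum>j=1..k. real (m j) * mixed_partial k (m(j := m j - 1)) g y)"
proof (induction k arbitrary: y)
  case 0 then show ?case by simp
next
  case (Suc k)
  let ?P = "partial (Suc k)"
  let ?r = "m (Suc k)"
  let ?A = "mixed_partial k m g"
  let ?B = "\<lambda>j. mixed_partial k (m(j := m j - 1)) g"
  have i: "Suc k \<in> {1..d}" using Suc.prems by auto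
  have G: "good d (?P ^^ q)" for q by (intro good_pow good_partial i)
  have GM: "good d (mixed_partial k q)" for q using Suc.prems by (intro good_mixed) auto
  have RA: "rep d ?A" by (rule good_rep[OF GM g])
  have RB: "rep d (mixed_partial k q g)" for q by (rule good_rep[OF GM g])
  have "mixed_partial (Suc k) m (\<lambda>z. Lf d z * g z) y =
     (?P ^^ ?r) (\<lambda>z. 1 * (Lf d z * ?A z) + (-1) * (\<Sum>j=1..k. real (m j) * ?B j z)) y"
    using Suc.IH Suc.prems by (simp, intro good_cong[OF G]) (simp_all add: fun_upd_def)
  also have "\<dots> = 1 * (?P ^^ ?r) (\<lambda>z. Lf d z * ?A z) y + (-1) * (?P ^^ ?r) (\<lambda>z. \<Sum>j=1..k. real (m j) * ?B j z) y"
    by (rule good_lin[OF G rep_mulL[OF RA] rep_sum[OF _ RB] Suc.prems(2)]) simp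
  also have "(?P ^^ ?r) (\<lambda>z. \<Sum>j=1..k. real (m j) * ?B j z) y = (\<Sum>j=1..k. real (m j) * (?P ^^ ?r) (?B j) y)"
    by (rule good_sum[OF G Suc.prems(2)]) (simp, rule RB)
  also have "(?P ^^ ?r) (\<lambda>z. Lf d z * ?A z) y = Lf d y * (?P ^^ ?r) ?A y - real ?r * (?P ^^ (?r - 1)) ?A y"
    by (rule iterLeib[OF i RA Suc.prems(2)])
  also have "(\<Sum>j=1..k. real (m j) * (?P ^^ ?r) (?B j) y) = (\<Sum>j=1..k. real (m j) * mixed_partial (Suc k) (m(j := m j - 1)) g y)"
    by (rule sum.cong) auto
  also have "(?P ^^ (?r - 1)) ?A = mixed_partial (Suc k) (m(Suc k := m (Suc k) - 1)) g"
    using mixed_idx[of k m "m(Suc k := m (Suc k) - 1)"] by simp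
  finally have X: "mixed_partial (Suc k) m (\<lambda>z. Lf d z * g z) y = 1 * (Lf d y * (?P ^^ ?r) ?A y - real ?r * mixed_partial (Suc k) (m(Suc k := m (Suc k) - 1)) g y) + (-1) * (\<Sum>j=1..k. real (m j) * mixed_partial (Suc k) (m(j := m j - 1)) g y)" .
  have S: "(\<Sum>j=1..Suc k. real (m j) * mixed_partial (Suc k) (m(j := m j - 1)) g y) = (\<Sum>j=1..k. real (m j) * mixed_partial (Suc k) (m(j := m j - 1)) g y) + real ?r * mixed_partial (Suc k) (m(Suc k := m (Suc k) - 1)) g y"
    by (subst sum.cl_ivl_Suc) simp
  have MS: "mixed_partial (Suc k) m g y = (?P ^^ ?r) ?A y" by simp
  show ?case unfolding S MS by (rule helper2[OF X])
qed

lemma comm1: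
  assumes f: "rep d f" and i: "i \<in> {1..d}" and j: "j \<in> {1..d}"
  shows "U d y \<Longrightarrow> (partial j ^^ r) (partial i f) y = partial i ((partial j ^^ r) f) y"
proof (induction r arbitrary: y)
  case 0 then show ?case by simp
next
  case (Suc r)
  have R: "rep d ((partial j ^^ r) f)" by (intro good_rep[OF good_pow[OF good_partial[OF j]] f])
  have "(partial j ^^ Suc r) (partial i f) y = partial j (partial i ((partial j ^^ r) f)) y"
    using Suc by (simp, intro partial_cong[OF _ Suc.prems j]) simp
  also have "\<dots> = partial i ((partial j ^^ Suc r) f) y"
    using partial_comm[OF R Suc.prems j i] by simp
  finally show ?case .
qed

lemma commM:
  assumes f: "rep d f" and i: "i \<in> {1..d}"
  shows "k < i \<Longrightarrow> U d y \<Longrightarrow> mixed_partial k m (partial i f) y = partial i (mixed_partial k m f) y"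
proof (induction k arbitrary: y)
  case 0 then show ?case by simp
next
  case (Suc k)
  have sk: "Suc k \<in> {1..d}" using Suc.prems i by auto
  have GM: "good d (mixed_partial k m)" using Suc.prems i by (intro good_mixed) auto
  have "mixed_partial (Suc k) m (partial i f) y = (partial (Suc k) ^^ m (Suc k)) (partial i (mixed_partial k m f)) y"
    using Suc by (simp, intro good_cong[OF good_pow[OF good_partial[OF sk]]]) simp_all
  also have "\<dots> = partial i (mixed_partial (Suc k) m f) y"
    using comm1[OF good_rep[OF GM f] i sk Suc.prems(2)] by simp
  finally show ?case .
qed

lemma commF:
  assumes f: "rep d f" and i: "1 \<le> i"
  shows "i \<le> k \<Longrightarrow> k \<le> d \<Longrightarrow> U d y \<Longrightarrow> mixed_partial k m (partial i f) y = mixed_partial k (m(i := m i + 1)) f y"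
proof (induction k arbitrary: y)
  case 0 then show ?case using i by simp
next
  case (Suc k)
  have sk: "Suc k \<in> {1..d}" using Suc.prems by auto
  show ?case
  proof (cases "i = Suc k")
    case True
    have ii: "i \<in> {1..d}" using True sk by simp
    have "mixed_partial (Suc k) m (partial i f) y = (partial i ^^ m i) (partial i (mixed_partial k m f)) y"
    proof -
      have "mixed_partial (Suc k) m (partial i f) y = (partial i ^^ m i) (mixed_partial k m (partial i f)) y"
        using True by simp
      also have "\<dots> = (partial i ^^ m i) (partial i (mixed_partial k m f)) y"
        using True Suc.prems by (intro good_cong[OF good_pow[OF good_partial[OF ii]]] commM[OF f ii]) simp_all
      finally show ?thesis .
    qed
    also have "\<dots> = mixed_partial (Suc k) (m(i := m i + 1)) f y"
      using True mixed_idx[of k m "m(i := m i + 1)"] by (simp add: funpow_swap1)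
    finally show ?thesis .
  next
    case False
    then have ik: "i \<le> k" using Suc.prems by auto
    have "mixed_partial (Suc k) m (partial i f) y = (partial (Suc k) ^^ m (Suc k)) (mixed_partial k (m(i := m i + 1)) f) y"
      using Suc ik by (simp, intro good_cong[OF good_pow[OF good_partial[OF sk]]]) (simp_all add: fun_upd_def)
    then show ?thesis using False by (simp add: fun_upd_def)
  qed
qed


theorem lemma4p1:
  fixes d :: nat and \<gamma> :: "nat \<Rightarrow> real" and n :: "nat \<Rightarrow> nat" and x :: "nat \<Rightarrow> real"
  assumes "d \<ge> 1"
    and "\<forall>i\<in>{1..d}. n i \<ge> 1"
    and "in_simplex_interior d x"
  shows "rodrigues d (\<gamma>(d+1 := -1)) n x =
         (1 - abs_sum d x) *
         (\<Sum>i=1..d. real (n i) * (\<gamma> i + real (n i)) / real (abs_sum d n) *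
                     rodrigues d (\<gamma>(d+1 := 1)) (n(i := n i - 1)) x)"
proof -
  have xU: "U d x" using assms(3) .
  define N where "N = real (abs_sum d n)"
  define a where "a = (\<lambda>j. \<gamma> j + real (n j))"
  define g0 where "g0 = E d [(1, a, N - 1)]"
  define f where "f = E d [(1, a, N)]"
  define H where "H = (\<lambda>i. E d [(1, a(i := a i - 1), N)])"
  define W where "W = (\<Prod>i=1..d. x i powr (- \<gamma> i))"
  define n' where "n' = (\<lambda>i. n(i := n i - 1))"
  have Lpos: "Lf d x > 0" by (rule Lf_pos[OF xU])
  have Nsum: "N = (\<Sum>i=1..d. real (n i))" unfolding N_def abs_sum_def by simp
  have "(\<Sum>i=1..d. real (n i)) \<ge> (\<Sum>i=1..d. 1)" using assms(2) by (intro sum_mono) auto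
  then have Npos: "N > 0" using assms(1) Nsum by simp
  have GM: "good d (mixed_partial d m)" for m by (rule good_mixed) simp
  have absn': "real (abs_sum d (n' i)) = N - 1" if i: "i \<in> {1..d}" for i
  proof -
    have "abs_sum d (n' i) + n i = abs_sum d n + (n i - 1)"
      unfolding abs_sum_def n'_def using sum_upd[where f=n and v="n i - 1", OF i] by simp
    moreover have "n i \<ge> 1" using assms(2) i by auto
    ultimately have "abs_sum d (n' i) + 1 = abs_sum d n" by arith
    then show ?thesis unfolding N_def by (metis add_diff_cancel_right' of_nat_1 of_nat_add)
  qed
  have lhs: "rodrigues d (\<gamma>(d+1 := -1)) n x = W * Lf d x * mixed_partial d n g0 x"
  proof -
    have "(\<Prod>i=1..d. x i powr (- (\<gamma>(d+1 := -1)) i)) = W" unfolding W_def by (rule prod.cong) auto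
    moreover have "(1 - abs_sum d x) powr (- (\<gamma>(d+1 := -1)) (d+1)) = Lf d x"
      using Lpos by (simp add: Lf_def powr_one)
    moreover have "(\<lambda>y. (\<Prod>i=1..d. y i powr ((\<gamma>(d+1 := -1)) i + real (n i))) *
            (1 - abs_sum d y) powr ((\<gamma>(d+1 := -1)) (d+1) + real (abs_sum d n))) = g0"
    proof (rule ext)
      fix y
      have "(\<Prod>i=1..d. y i powr ((\<gamma>(d+1 := -1)) i + real (n i))) = (\<Prod>j=1..d. y j powr a j)"
        unfolding a_def by (rule prod.cong) auto
      then show "(\<Prod>i=1..d. y i powr ((\<gamma>(d+1 := -1)) i + real (n i))) *
            (1 - abs_sum d y) powr ((\<gamma>(d+1 := -1)) (d+1) + real (abs_sum d n)) = g0 y"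
        unfolding g0_def N_def by simp
    qed
    ultimately show ?thesis unfolding rodrigues_def by simp
  qed
  have rhsi: "rodrigues d (\<gamma>(d+1 := 1)) (n' i) x = W * Lf d x powr (-1) * mixed_partial d (n' i) (H i) x"
    if i: "i \<in> {1..d}" for i
  proof -
    have "(\<Prod>j=1..d. x j powr (- (\<gamma>(d+1 := 1)) j)) = W" unfolding W_def by (rule prod.cong) auto
    moreover have "(1 - abs_sum d x) powr (- (\<gamma>(d+1 := 1)) (d+1)) = Lf d x powr (-1)"
      by (simp add: Lf_def)
    moreover have "(\<lambda>y. (\<Prod>j=1..d. y j powr ((\<gamma>(d+1 := 1)) j + real (n' i j))) *
            (1 - abs_sum d y) powr ((\<gamma>(d+1 := 1)) (d+1) + real (abs_sum d (n' i)))) = H i"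
    proof (rule ext)
      fix y
      have "(\<Prod>j=1..d. y j powr ((\<gamma>(d+1 := 1)) j + real (n' i j))) = (\<Prod>j=1..d. y j powr (a(i := a i - 1)) j)"
        unfolding a_def n'_def using assms(2) i by (intro prod.cong) (auto simp: of_nat_diff algebra_simps)
      then show "(\<Prod>j=1..d. y j powr ((\<gamma>(d+1 := 1)) j + real (n' i j))) *
            (1 - abs_sum d y) powr ((\<gamma>(d+1 := 1)) (d+1) + real (abs_sum d (n' i))) = H i y"
        unfolding H_def using absn'[OF i] by simp
    qed
    ultimately show ?thesis unfolding rodrigues_def by simp
  qed
  have key: "a i * mixed_partial d (n' i) (H i) x = mixed_partial d n f x + N * mixed_partial d (n' i) g0 x"
    if i: "i \<in> {1..d}" for i
  proof -
    have pf: "partial i f z = E d (dT i [(1, a, N)]) z" if "U d z" for z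
      unfolding f_def by (rule partial_E[OF that i])
    have "a i * mixed_partial d (n' i) (H i) x = mixed_partial d (n' i) (\<lambda>z. a i * H i z) x"
      unfolding H_def by (rule good_scale[OF GM rep_E xU, symmetric])
    also have "\<dots> = mixed_partial d (n' i) (\<lambda>z. 1 * partial i f z + N * g0 z) x"
      by (rule good_cong[OF GM _ xU]) (simp add: pf H_def g0_def)
    also have "\<dots> = 1 * mixed_partial d (n' i) (partial i f) x + N * mixed_partial d (n' i) g0 x"
      unfolding f_def g0_def by (rule good_lin[OF GM rep_partial[OF rep_E i] rep_E xU])
    also have "mixed_partial d (n' i) (partial i f) x = mixed_partial d ((n' i)(i := n' i i + 1)) f x"
      unfolding f_def by (rule commF[OF rep_E]) (use i xU in auto)
    also have "(n' i)(i := n' i i + 1) = n" using assms(2) i by (force simp: n'_def fun_eq_iff)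
    finally show ?thesis by simp
  qed
  have leib: "mixed_partial d n f x = Lf d x * mixed_partial d n g0 x - (\<Sum>j=1..d. real (n j) * mixed_partial d (n' j) g0 x)"
  proof -
    have "mixed_partial d n f x = mixed_partial d n (\<lambda>z. Lf d z * g0 z) x"
    proof (rule good_cong[OF GM _ xU])
      fix z assume z: "U d z"
      have "Lf d z powr N = Lf d z * Lf d z powr (N - 1)"
        using Lf_pos[OF z] powr_add[of "Lf d z" 1 "N - 1"] by simp
      then show "f z = Lf d z * g0 z" unfolding f_def g0_def by (simp add: Et_alt del: Et.simps)
    qed
    also have "\<dots> = Lf d x * mixed_partial d n g0 x - (\<Sum>j=1..d. real (n j) * mixed_partial d (n' j) g0 x)"
      unfolding g0_def n'_def by (rule Leibniz[OF rep_E order.refl xU])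
    finally show ?thesis .
  qed
  define MF where "MF = mixed_partial d n f x"
  define G where "G = (\<lambda>j. mixed_partial d (n' j) g0 x)"
  have LL: "Lf d x * Lf d x powr (-1) = 1" using Lpos by (simp add: powr_minus powr_one)
  have "(1 - abs_sum d x) *
         (\<Sum>i=1..d. real (n i) * (\<gamma> i + real (n i)) / real (abs_sum d n) *
                     rodrigues d (\<gamma>(d+1 := 1)) (n(i := n i - 1)) x)
      = (\<Sum>i=1..d. W * MF / N * real (n i) + W * (real (n i) * G i))"
    unfolding sum_distrib_left
  proof (rule sum.cong[OF refl])
    fix i assume i: "i \<in> {1..d}"
    have r: "rodrigues d (\<gamma>(d+1 := 1)) (n(i := n i - 1)) x = W * Lf d x powr (-1) * mixed_partial d (n' i) (H i) x"
      using rhsi[OF i] by (simp add: n'_def)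
    have "(1 - abs_sum d x) * (real (n i) * (\<gamma> i + real (n i)) / real (abs_sum d n) *
                     rodrigues d (\<gamma>(d+1 := 1)) (n(i := n i - 1)) x)
        = real (n i) / N * W * (Lf d x * Lf d x powr (-1)) * (a i * mixed_partial d (n' i) (H i) x)"
      unfolding r by (simp add: Lf_def N_def a_def)
    also have "\<dots> = real (n i) / N * W * (MF + N * G i)" unfolding LL key[OF i] MF_def G_def by simp
    also have "\<dots> = W * MF / N * real (n i) + W * (real (n i) * G i)" using Npos by (simp add: field_simps)
    finally show "(1 - abs_sum d x) * (real (n i) * (\<gamma> i + real (n i)) / real (abs_sum d n) *
                     rodrigues d (\<gamma>(d+1 := 1)) (n(i := n i - 1)) x) = W * MF / N * real (n i) + W * (real (n i) * G i)" .
  qed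
  also have "\<dots> = W * MF / N * N + W * (\<Sum>i=1..d. real (n i) * G i)"
    unfolding sum.distrib sum_distrib_left[symmetric] Nsum ..
  also have "\<dots> = W * Lf d x * mixed_partial d n g0 x"
  proof -
    have "W * MF / N * N = W * MF" using Npos by simp
    then show ?thesis unfolding MF_def leib G_def by (simp add: algebra_simps)
  qed
  finally show ?thesis using lhs by simp
qed

end
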